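(* For every $n\in\mathbb{N}$, \[ \frac{2}{3n+1}\sum_{j=0}^{2n}\sum_{i=0}^{j}\frac{\binom{3n+1}{i}}{\binom{3n}{j}}=\psi(3n+2)-\psi(n+1)-\log 2+\frac{3n+2}{2n+2}\,{}_3F_2\!\left(1,1,3n+3;\,2,n+2;\,\tfrac12\right). \]
   Context: $\psi=\Gamma'/\Gamma$ is the digamma function (so $\psi(3n+2)-\psi(n+1)=H_{3n+1}-H_n$ with $H_m=\sum_{k=1}^m\frac1k$). Pochhammer symbol: $(\alpha)_0=1$, $(\alpha)_k=\alpha(\alpha+1)\cdots(\alpha+k-1)$. ${}_3F_2(a,b,c;d,e;z)=\sum_{k\ge0}\frac{(a)_k(b)_k(c)_k}{(d)_k(e)_k}\frac{z^k}{k!}$. *)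

theory Defs
  imports "HOL-Analysis.Analysis"
begin

definition hyp3F2 :: "real \<Rightarrow> real \<Rightarrow> real \<Rightarrow> real \<Rightarrow> real \<Rightarrow> real \<Rightarrow> real" where
  "hyp3F2 a b c d e z =
     (\<Sum>k. pochhammer a k * pochhammer b k * pochhammer c k /
           (pochhammer d k * pochhammer e k) * z ^ k / fact k)"

end

theory Submission
  imports Defs
begin


definition AA :: "nat \<Rightarrow> nat \<Rightarrow> real" where "AA N j = (\<Sum>i<j. real (N choose i))"
definition EE :: "nat \<Rightarrow> nat \<Rightarrow> real" where "EE N r = (\<Sum>i<r. real (N choose i) / (real r - real i))"

lemma absorb: "real (Suc k) * real (N choose Suc k) = (real N - real k) * real (N choose k)"
proof (cases "k < N")
  case True
  have "Suc k * (N choose Suc k) = N * ((N - 1) choose k)" by (rule binomial_absorption)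
  also have "\<dots> = (N - k) * (N choose k)" using binomial_absorb_comp[of N k] by simp
  finally have "real (Suc k * (N choose Suc k)) = real ((N - k) * (N choose k))" by simp
  then have "real (Suc k) * real (N choose Suc k) = real (N - k) * real (N choose k)" by (simp only: of_nat_mult)
  with True show ?thesis by (simp add: of_nat_diff)
next
  case False
  then show ?thesis by (cases "k = N") (auto simp: binomial_eq_0)
qed

lemma key: "2 * AA N (Suc r) = real (N choose r) + real (Suc r) * EE N (Suc r) - (real N - real r) * EE N r"
proof -
  have "real (Suc r) * EE N (Suc r) = (\<Sum>i<Suc r. real (N choose i) * (real (Suc r) / (real (Suc r) - real i)))"
    unfolding EE_def sum_distrib_left by (intro sum.cong refl) (simp add: ac_simps)
  also have "\<dots> = (\<Sum>i<Suc r. real (N choose i) + real i * real (N choose i) / (real (Suc r) - real i))"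
    by (intro sum.cong refl) (auto simp: field_simps)
  also have "\<dots> = AA N (Suc r) + (\<Sum>i<Suc r. real i * real (N choose i) / (real (Suc r) - real i))"
    by (simp add: sum.distrib AA_def)
  also have "(\<Sum>i<Suc r. real i * real (N choose i) / (real (Suc r) - real i))
      = (\<Sum>k<r. real (Suc k) * real (N choose Suc k) / (real (Suc r) - real (Suc k)))"
    by (subst sum.lessThan_Suc_shift) simp
  also have "\<dots> = (\<Sum>k<r. (real N - real r) * (real (N choose k) / (real r - real k)) + real (N choose k))"
  proof (intro sum.cong refl)
    fix k assume "k \<in> {..<r}"
    then have d: "real r - real k \<noteq> 0" by simp
    have e: "real (Suc r) - real (Suc k) = real r - real k" by simp
    show "real (Suc k) * real (N choose Suc k) / (real (Suc r) - real (Suc k)) = (real N - real r) * (real (N choose k) / (real r - real k)) + real (N choose k)"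
      unfolding absorb[of k N] e using d by (simp add: field_simps)
  qed
  also have "\<dots> = (real N - real r) * EE N r + AA N r"
    by (simp add: sum.distrib EE_def AA_def sum_distrib_left)
  finally show ?thesis by (simp add: AA_def)
qed

lemma fin: "1 \<le> N \<Longrightarrow> r \<le> N \<Longrightarrow>
  2 / real N * (\<Sum>j<r. AA N (Suc j) / real ((N - 1) choose j))
   = harm N - harm (N - r) + EE N r / real (N choose r)"
proof (induction r)
  case 0
  then show ?case by (simp add: EE_def)
next
  case (Suc r)
  then have IH: "2 / real N * (\<Sum>j<r. AA N (Suc j) / real ((N - 1) choose j))
   = harm N - harm (N - r) + EE N r / real (N choose r)" by simp
  have rN: "r < N" using Suc by simp
  have c1: "real (N choose Suc r) = real (N choose r) * (real N - real r) / real (Suc r)"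
    using absorb[of r N] by (simp add: field_simps)
  have c2: "real ((N - 1) choose r) = real (N choose r) * (real N - real r) / real N"
  proof -
    have "(N - r) * (N choose r) = N * ((N - 1) choose r)" by (rule binomial_absorb_comp)
    then have "real ((N - r) * (N choose r)) = real (N * ((N - 1) choose r))" by simp
    then show ?thesis using rN Suc.prems by (simp add: of_nat_diff field_simps)
  qed
  have h: "harm (N - r) = harm (N - Suc r) + 1 / (real N - real r)"
  proof -
    have "N - r = Suc (N - Suc r)" using rN by simp
    then show ?thesis using rN by (simp add: harm_Suc of_nat_diff inverse_eq_divide)
  qed
  have pos: "real (N choose r) > 0" using rN by simp
  have d: "real N - real r > 0" using rN by simp
  have "2 / real N * (\<Sum>j<Suc r. AA N (Suc j) / real ((N - 1) choose j))
     = 2 / real N * (\<Sum>j<r. AA N (Suc j) / real ((N - 1) choose j)) + 2 / real N * (AA N (Suc r) / real ((N - 1) choose r))"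
    by (simp add: distrib_left)
  also have "\<dots> = harm N - harm (N - r) + EE N r / real (N choose r) + 2 * AA N (Suc r) / (real (N choose r) * (real N - real r))"
  proof -
    have N0: "real N > 0" using Suc.prems by simp
    have "2 / real N * (AA N (Suc r) / real ((N - 1) choose r)) = 2 * AA N (Suc r) / (real (N choose r) * (real N - real r))"
      unfolding c2 using pos d N0 by (simp add: field_simps)
    then show ?thesis using IH by simp
  qed
  also have "\<dots> = harm N - harm (N - Suc r) + EE N (Suc r) / real (N choose Suc r)"
  proof -
    have k2: "real (Suc r) * EE N (Suc r) = 2 * AA N (Suc r) + (real N - real r) * EE N r - real (N choose r)"
      using key[of N r] by simp
    have "EE N (Suc r) / real (N choose Suc r) = real (Suc r) * EE N (Suc r) / (real (N choose r) * (real N - real r))"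
      unfolding c1 using pos d by (simp add: field_simps)
    also have "\<dots> = 2 * AA N (Suc r) / (real (N choose r) * (real N - real r)) + EE N r / real (N choose r) - 1 / (real N - real r)"
      unfolding k2 using pos d by (simp add: add_divide_distrib diff_divide_distrib)
    finally show ?thesis unfolding h by simp
  qed
  finally show ?case .
qed



lemma pw: "(1 + (-1/2::real)) powr (- real (Suc s)) = 2 ^ Suc s"
proof -
  have e: "1 + (-1/2::real) = 1/2" by simp
  have p: "(1/2::real) powr real (Suc s) = (1/2)^Suc s" by (rule powr_realpow) simp
  have "(1 + (-1/2::real)) powr (- real (Suc s)) = inverse ((1/2::real) powr real (Suc s))"
    unfolding e by (rule powr_minus)
  also have "\<dots> = inverse ((1/2::real)^Suc s)" unfolding p ..
  also have "\<dots> = 2 ^ Suc s" by (simp add: power_one_over)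
  finally show ?thesis .
qed

lemma negbin_tail: assumes "(\<lambda>k. real (s + k choose s) * (1/2::real)^k) sums 2 ^ Suc s"
  shows "(\<lambda>m. real (m choose s) * (1/2::real) ^ m) sums 2"
proof -
  have "(\<lambda>k. (1/2::real)^s * (real (s + k choose s) * (1/2::real)^k)) sums ((1/2)^s * 2 ^ Suc s)"
    using assms by (rule sums_mult)
  moreover have "(1/2::real)^s * 2 ^ Suc s = 2"
    by (simp add: power_one_over)
  moreover have "(\<lambda>k. (1/2::real)^s * (real (s + k choose s) * (1/2::real)^k)) = (\<lambda>k. real ((k + s) choose s) * (1/2::real)^(k + s))"
    by (rule ext) (simp add: power_add add.commute)
  ultimately have "(\<lambda>k. real ((k + s) choose s) * (1/2::real)^(k + s)) sums 2"
    by metis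
  then have "(\<lambda>m. real (m choose s) * (1/2::real) ^ m) sums (2 + (\<Sum>i<s. real (i choose s) * (1/2::real) ^ i))"
    by (subst (asm) sums_iff_shift)
  moreover have "(\<Sum>i<s. real (i choose s) * (1/2::real) ^ i) = 0"
    by (intro sum.neutral) auto
  ultimately show ?thesis by simp
qed

lemma ln2_sums: "(\<lambda>m. 1 / real (Suc m) * (1/2::real) ^ Suc m) sums ln 2"
proof -
  have "(\<lambda>n. - ((- (-1/2::real)) ^ n) / of_nat n) sums ln (1 + (-1/2))"
    by (rule ln_series') simp
  moreover have "ln (1 + (-1/2::real)) = - ln 2" by (simp add: ln_div)
  ultimately have "(\<lambda>n. - ((1/2::real) ^ n) / of_nat n) sums (- ln 2)"
    by simp
  then have "(\<lambda>n. ((1/2::real) ^ n) / of_nat n) sums (ln 2)"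
    using sums_minus by fastforce
  then have "(\<lambda>n. ((1/2::real) ^ Suc n) / of_nat (Suc n)) sums (ln 2)"
    by (subst sums_Suc_iff) simp
  moreover have "(\<lambda>n. ((1/2::real) ^ Suc n) / of_nat (Suc n)) = (\<lambda>m. 1 / real (Suc m) * (1/2::real) ^ Suc m)"
    by (rule ext) simp
  ultimately show ?thesis by simp
qed

lemma negbin: "(\<lambda>m. real (m choose s) * (1/2::real) ^ m) sums 2"
proof -
  have S: "(\<lambda>k. ((- real (Suc s)) gchoose k) * (-1/2::real)^k) sums (1 + (-1/2)) powr (- real (Suc s))"
    by (rule gen_binomial_real) simp
  have E: "\<And>k. ((- real (Suc s)) gchoose k) * (-1/2::real)^k = real (s + k choose s) * (1/2)^k"
  proof -
    fix k
    have "((- real (Suc s)) gchoose k) = (-1)^k * ((real (Suc s) + real k - 1) gchoose k)"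
      by (rule gbinomial_minus)
    also have "real (Suc s) + real k - 1 = real (s + k)" by simp
    also have "(real (s + k) gchoose k) = real (s + k choose k)" by (simp add: binomial_gbinomial)
    also have "s + k choose k = s + k choose s" by (metis binomial_symmetric add_diff_cancel_right' le_add2)
    finally have g: "((- real (Suc s)) gchoose k) = (-1)^k * real (s + k choose s)" .
    have m: "(-1/2::real)^k = (-1)^k * (1/2)^k"
      using power_minus[of "1/2::real" k] by simp
    have mm: "((-1::real)^k)*((-1)^k) = 1" by (induction k) auto
    show "((- real (Suc s)) gchoose k) * (-1/2::real)^k = real (s + k choose s) * (1/2)^k"
    proof -
      have "(- real (Suc s) gchoose k) * (- 1 / 2) ^ k = ((-1::real)^k*(-1)^k) * (real (s + k choose s) * (1/2)^k)"
        unfolding g m by (simp only: mult_ac)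
      then show ?thesis unfolding mm by simp
    qed
  qed
  from S have "(\<lambda>k. real (s + k choose s) * (1/2::real)^k) sums 2 ^ Suc s"
    unfolding E pw .
  then show ?thesis by (rule negbin_tail)
qed

lemma EE_Suc: "EE (Suc N) (Suc s) = EE N (Suc s) + EE N s"
proof -
  have h1: "EE (Suc N) (Suc s) = 1 / real (Suc s) + (\<Sum>i<s. real (Suc N choose Suc i) / (real (Suc s) - real (Suc i)))"
    unfolding EE_def by (subst sum.lessThan_Suc_shift) simp
  have h2: "\<dots> = 1 / real (Suc s) + (\<Sum>i<s. real (N choose Suc i) / (real s - real i)) + (\<Sum>i<s. real (N choose i) / (real s - real i))"
    by (simp add: sum.distrib add_divide_distrib)
  have h3: "EE N (Suc s) = 1 / real (Suc s) + (\<Sum>i<s. real (N choose Suc i) / (real (Suc s) - real (Suc i)))"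
    unfolding EE_def by (subst sum.lessThan_Suc_shift) simp
  show ?thesis unfolding h1 h2 h3 by (simp add: EE_def)
qed

lemma Gsums: "(\<lambda>m. real (N + Suc m choose r) / real (Suc m) * (1/2::real) ^ Suc m) sums (real (N choose r) * ln 2 + EE N r)"
proof (induction N arbitrary: r)
  case 0
  show ?case
  proof (cases r)
    case 0
    then show ?thesis using ln2_sums by (simp add: EE_def)
  next
    case (Suc s)
    have S0: "(\<lambda>m. (1 / (2 * real (Suc s))) * (real (m choose s) * (1/2::real) ^ m)) sums ((1 / (2 * real (Suc s))) * 2)"
      using negbin by (rule sums_mult)
    have F: "(\<lambda>m. real (Suc m choose Suc s) / real (Suc m) * (1/2::real) ^ Suc m)
       = (\<lambda>m. (1 / (2 * real (Suc s))) * (real (m choose s) * (1/2::real) ^ m))"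
    proof
     show "\<And>m. real (Suc m choose Suc s) / real (Suc m) * (1/2::real) ^ Suc m
       = (1 / (2 * real (Suc s))) * (real (m choose s) * (1/2::real) ^ m)"
    proof -
      fix m
      have "real (Suc m) * real (m choose s) = real (Suc m choose Suc s) * real (Suc s)"
        using Suc_times_binomial_eq[of m s] by (metis of_nat_mult)
      then show "real (Suc m choose Suc s) / real (Suc m) * (1/2::real) ^ Suc m
       = (1 / (2 * real (Suc s))) * (real (m choose s) * (1/2::real) ^ m)"
        by (simp add: field_simps del: binomial_Suc_Suc of_nat_Suc)
    qed
    qed
    have EE0: "EE 0 (Suc s) = 1 / real (Suc s)"
      unfolding EE_def by (subst sum.lessThan_Suc_shift) simp
    have v: "(1 / (2 * real (Suc s))) * 2 = 1 / real (Suc s)"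
      by (simp add: divide_simps del: of_nat_Suc)
    have w: "real (0 choose Suc s) * ln 2 + EE 0 (Suc s) = 1 / real (Suc s)" by (simp add: EE0)
    show ?thesis unfolding Suc add_0 w F using S0 unfolding v .
  qed
next
  case (Suc N)
  show ?case
  proof (cases r)
    case 0
    then show ?thesis using ln2_sums by (simp add: EE_def)
  next
    case (Suc s)
    have "(\<lambda>m. real (N + Suc m choose s) / real (Suc m) * (1/2::real) ^ Suc m
             + real (N + Suc m choose Suc s) / real (Suc m) * (1/2::real) ^ Suc m)
          sums ((real (N choose s) * ln 2 + EE N s) + (real (N choose Suc s) * ln 2 + EE N (Suc s)))"
      by (intro sums_add Suc.IH)
    then show ?thesis using Suc by (simp add: EE_Suc add_divide_distrib algebra_simps)
  qed
qed



lemma poch_nat: "pochhammer (real (Suc a)) k = fact (a + k) / fact a"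
proof (induction k)
  case 0 then show ?case by simp
next
  case (Suc k)
  have "pochhammer (real (Suc a)) (Suc k) = pochhammer (real (Suc a)) k * (real (Suc a) + real k)"
    by (simp add: pochhammer_Suc)
  also have "\<dots> = fact (a + k) / fact a * real (Suc (a + k))" using Suc by simp
  also have "\<dots> = fact (a + Suc k) / fact a" by (simp add: algebra_simps)
  finally show ?case .
qed

lemma alg: fixes A B D E F s h fk :: real
  assumes "B \<noteq> 0" "D \<noteq> 0" "E \<noteq> 0" "F \<noteq> 0" "s \<noteq> 0" "fk \<noteq> 0"
  shows "fk * fk * (A / B) / (s * fk * (D / E)) * h / fk = 2 * F * E / B * (A / (F * D) / s * (1/2 * h))"
  using assms by (simp add: field_simps)

lemma term_eq:
  fixes n k :: nat
  defines "K2 \<equiv> 2 * fact (2*n+1) * fact (n+1) / fact (3*n+2) :: real"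
  shows "pochhammer 1 k * pochhammer 1 k * pochhammer (real (3*n+3)) k /
           (pochhammer 2 k * pochhammer (real (n+2)) k) * (1/2::real) ^ k / fact k
       = K2 * (real (3*n+1 + Suc k choose (2*n+1)) / real (Suc k) * (1/2::real) ^ Suc k)"
proof -
  have p1: "pochhammer (1::real) k = fact k" by (simp add: pochhammer_fact)
  have p2: "pochhammer (2::real) k = fact (1 + k)"
    using poch_nat[of 1 k] by (simp add: numeral_2_eq_2)
  have p3: "pochhammer (real (3*n+3)) k = fact (3*n+2 + k) / fact (3*n+2)"
    using poch_nat[of "3*n+2" k] by (simp add: numeral_3_eq_3)
  have p4: "pochhammer (real (n+2)) k = fact (n+1 + k) / fact (n+1)"
    using poch_nat[of "n+1" k] by (simp add: numeral_2_eq_2)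
  have b: "real (3*n+1 + Suc k choose (2*n+1)) = fact (3*n+2+k) / (fact (2*n+1) * fact (n+1+k))"
  proof -
    have "real (3*n+2+k choose (2*n+1)) = fact (3*n+2+k) / (fact (2*n+1) * fact (3*n+2+k - (2*n+1)))"
      by (rule binomial_fact) simp
    moreover have "3*n+2+k - (2*n+1) = n+1+k" by simp
    moreover have "3*n+1 + Suc k = 3*n+2+k" by simp
    ultimately show ?thesis by simp
  qed
  have f1: "fact (1 + k) = real (Suc k) * fact k" by simp
  have h: "(1/2::real) ^ Suc k = 1/2 * (1/2) ^ k" by simp
  show ?thesis unfolding p1 p2 p3 p4 b f1 K2_def h
    by (rule alg) simp_all
qed


lemma alg2: fixes a m X Y Z :: real
  assumes "a \<noteq> 0" "m \<ge> 0" "X \<noteq> 0" "Y \<noteq> 0" "Z \<noteq> 0"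
  shows "a / (2 * m + 2) * (2 * Y * ((m + 1) * Z) / (a * X)) * (X / (Y * Z)) = 1"
proof -
  have "m + 1 \<noteq> 0" using assms by simp
  moreover have "2 * m + 2 = 2 * (m + 1)" by simp
  ultimately have nz: "(2*(m+1))*(a*X)*(Y*Z) \<noteq> 0" and e2: "2 * m + 2 = 2 * (m + 1)" using assms by simp_all
  have "a/(2*(m+1)) * (2*Y*((m+1)*Z)/(a*X)) * (X/(Y*Z)) = (a*(2*Y*((m+1)*Z))*X) / ((2*(m+1))*(a*X)*(Y*Z))"
    by simp
  also have "(a*(2*Y*((m+1)*Z))*X) = ((2*(m+1))*(a*X)*(Y*Z))" by (simp only: mult_ac)
  finally show ?thesis unfolding e2 using nz by simp
qed

lemma hyp_val:
  fixes n :: nat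
  shows "(3 * real n + 2) / (2 * real n + 2) * hyp3F2 1 1 (real (3*n+3)) 2 (real (n+2)) (1/2)
     = ln 2 + EE (3*n+1) (2*n+1) / real (3*n+1 choose (2*n+1))"
proof -
  define K2 :: real where "K2 = 2 * fact (2*n+1) * fact (n+1) / fact (3*n+2)"
  define C :: real where "C = real (3*n+1 choose (2*n+1))"
  have S: "(\<lambda>k. K2 * (real (3*n+1 + Suc k choose (2*n+1)) / real (Suc k) * (1/2::real) ^ Suc k))
      sums (K2 * (C * ln 2 + EE (3*n+1) (2*n+1)))"
    unfolding C_def by (intro sums_mult Gsums)
  have T: "(\<lambda>k. pochhammer 1 k * pochhammer 1 k * pochhammer (real (3*n+3)) k /
           (pochhammer 2 k * pochhammer (real (n+2)) k) * (1/2::real) ^ k / fact k)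
     = (\<lambda>k. K2 * (real (3*n+1 + Suc k choose (2*n+1)) / real (Suc k) * (1/2::real) ^ Suc k))"
    by (rule ext) (unfold K2_def, rule term_eq)
  have "hyp3F2 1 1 (real (3*n+3)) 2 (real (n+2)) (1/2)
     = (\<Sum>k. K2 * (real (3*n+1 + Suc k choose (2*n+1)) / real (Suc k) * (1/2::real) ^ Suc k))"
    unfolding hyp3F2_def T ..
  also have "\<dots> = K2 * (C * ln 2 + EE (3*n+1) (2*n+1))"
    using S by (rule sums_unique[symmetric])
  finally have "hyp3F2 1 1 (real (3*n+3)) 2 (real (n+2)) (1/2) = K2 * (C * ln 2 + EE (3*n+1) (2*n+1))" .
  moreover have "(3 * real n + 2) / (2 * real n + 2) * K2 * C = 1"
  proof -
    have c: "C = fact (3*n+1) / (fact (2*n+1) * fact n)"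
    proof -
      have "C = fact (3*n+1) / (fact (2*n+1) * fact (3*n+1 - (2*n+1)))"
        unfolding C_def by (rule binomial_fact) simp
      moreover have "3*n+1 - (2*n+1) = n" by simp
      ultimately show ?thesis by simp
    qed
    have f1: "(fact (3*n+2) :: real) = (3 * real n + 2) * fact (3*n+1)"
    proof -
      have "3*n+2 = Suc (3*n+1)" by simp
      then have "(fact (3*n+2) :: real) = real (Suc (3*n+1)) * fact (3*n+1)" by (simp only: fact_Suc)
      then show ?thesis by simp
    qed
    have f2: "(fact (n+1) :: real) = (real n + 1) * fact n" by simp
    have pos: "(fact (3*n+1) :: real) > 0" "(fact (2*n+1) :: real) > 0" "(fact n :: real) > 0" by simp_all
    have q: "3 * real n + 2 > 0" "real n + 1 > 0" by simp_all
    show ?thesis unfolding c K2_def f1 f2 by (rule alg2) simp_all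
  qed
  moreover have "C > 0"
  proof -
    have "0 < (3*n+1 choose (2*n+1))" by (rule zero_less_binomial) simp
    then show ?thesis unfolding C_def by (simp only: of_nat_0_less_iff)
  qed
  ultimately show ?thesis unfolding C_def[symmetric]
    by (simp add: field_simps)
qed

theorem mainTheorem16:
  fixes n :: nat
  shows "2 / (3 * real n + 1) *
           (\<Sum>j=0..2*n. \<Sum>i=0..j. real (Suc (3*n) choose i) / real (3*n choose j))
         = Digamma (real (3*n+2)) - Digamma (real (n+1)) - ln 2
           + (3 * real n + 2) / (2 * real n + 2)
             * hyp3F2 1 1 (real (3*n+3)) 2 (real (n+2)) (1/2)"
proof -
  have L: "(\<Sum>j=0..2*n. \<Sum>i=0..j. real (Suc (3*n) choose i) / real (3*n choose j))
      = (\<Sum>j<2*n+1. AA (3*n+1) (Suc j) / real ((3*n+1 - 1) choose j))"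
    unfolding AA_def atLeast0AtMost lessThan_Suc_atMost[symmetric] sum_divide_distrib[symmetric]
    by simp
  have F: "2 / real (3*n+1) * (\<Sum>j<2*n+1. AA (3*n+1) (Suc j) / real ((3*n+1 - 1) choose j))
     = harm (3*n+1) - harm (3*n+1 - (2*n+1)) + EE (3*n+1) (2*n+1) / real (3*n+1 choose (2*n+1))"
    by (rule fin) simp_all
  have D1: "Digamma (real (3*n+2)) = harm (3*n+1) - euler_mascheroni"
  proof -
    have "real (3*n+2) = of_nat (Suc (3*n+1))" by simp
    then show ?thesis by (simp only: Digamma_of_nat)
  qed
  have D2: "Digamma (real (n+1)) = harm n - euler_mascheroni"
  proof -
    have "real (n+1) = of_nat (Suc n)" by simp
    then show ?thesis by (simp only: Digamma_of_nat)
  qed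
  have e: "3*n+1 - (2*n+1) = n" by simp
  have r: "real (3*n+1) = 3 * real n + 1" by simp
  show ?thesis unfolding L D1 D2 hyp_val[of n] using F unfolding e r by simp
qed


end
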